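(* Fix $x\in\mathbf{X}\cup\mathbf{X}^+$. (i) Suppose $H_{TP^+}(x)\le\delta$, and define OOD detectors by $\mathbf{P}'_k(x\in\mathbf{X}_k\mid D)=\mathbf{P}(x\in\mathbf{X}_k\mid D)$, $k=1,\dots,T$. Then $H_{OOD^+,k}(x)\le\delta$ for all $k=1,\dots,T$. (ii) Suppose OOD detectors satisfy $H_{OOD^+,k}(x)\le\delta_k$ for $k=1,\dots,T$, and define the open-world task-id prediction by $$\mathbf{P}(x\in\mathbf{X}_k\mid D)=\frac{\mathbf{P}'_k(x\in\mathbf{X}_k\mid D)}{\sum_{k'}\mathbf{P}'_{k'}(x\in\mathbf{X}_{k'}\mid D)+\prod_{k'}(1-\mathbf{P}'_{k'}(x\in\mathbf{X}_{k'}\mid D))},\qquad \mathbf{P}(x\in\mathbf{X}^+\mid D)=\frac{\prod_{k'}(1-\mathbf{P}'_{k'}(x\in\mathbf{X}_{k'}\mid D))}{\sum_{k'}\mathbf{P}'_{k'}(x\in\mathbf{X}_{k'}\mid D)+\prod_{k'}(1-\mathbf{P}'_{k'}(x\in\mathbf{X}_{k'}\mid D))}.$$ Then $$H_{TP^+}(x)\le\max\Big(\big(\textstyle\sum_k\mathbf{1}_{x\in\mathbf{X}_k}e^{\delta_k}\big)\big(\sum_k(1+\mathbf{1}_{x\in\mathbf{X}_k})(1-e^{-\delta_k})\big),\ \prod_k e^{\delta_k}\sum_k(1-e^{-\delta_k})\Big),$$ where $\mathbf{1}_{x\in\mathbf{X}_k}$ is the indicator of $x\in\mathbf{X}_k$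.
   Context: Open-world setting. $\mathbf{X}$ is the disjoint union of task domains $\mathbf{X}_1,\dots,\mathbf{X}_T$, and $\mathbf{X}^+$ is an open-world OOD domain disjoint from $\mathbf{X}$. $D$ is a fixed conditioning event. An open-world task-id prediction (TP$^+$) is a probability distribution over the $T+1$ outcomes $\{\mathbf{P}(x\in\mathbf{X}_k\mid D)\}_{k=1}^T\cup\{\mathbf{P}(x\in\mathbf{X}^+\mid D)\}$ (nonnegative, summing to $1$), with $H_{TP^+}(x)=-\log\mathbf{P}(x\in\mathbf{X}_{k_0}\mid D)$ if $x\in\mathbf{X}_{k_0}$ and $H_{TP^+}(x)=-\log\mathbf{P}(x\in\mathbf{X}^+\mid D)$ if $x\in\mathbf{X}^+$. An OOD detector for task $k$ is a value $\mathbf{P}'_k(x\in\mathbf{X}_k\mid D)\in[0,1]$ with $\mathbf{P}'_k(x\in(\mathbf{X}\cup\mathbf{X}^+)\setminus\mathbf{X}_k\mid D)=1-\mathbf{P}'_k(x\in\mathbf{X}_k\mid D)$; its open-world cross-entropy is $H_{OOD^+,k}(x)=-\log\mathbf{P}'_k(x\in\mathbf{X}_k\mid D)$ if $x\in\mathbf{X}_k$ and $H_{OOD^+,k}(x)=-\log\mathbf{P}'_k(x\in(\mathbf{X}\cup\mathbf{X}^+)\setminus\mathbf{X}_k\mid D)$ if $x\in(\mathbf{X}\cup\mathbf{X}^+)\setminus\mathbf{X}_k$. *)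

theory Defs
  imports "HOL-Library.Extended_Real" "HOL-Library.Disjoint_Sets"
begin

definition neglog :: "real \<Rightarrow> ereal" where
  "neglog p = (if p > 0 then ereal (- ln p) else \<infinity>)"

definition open_world :: "nat \<Rightarrow> (nat \<Rightarrow> 'a set) \<Rightarrow> 'a set \<Rightarrow> bool" where
  "open_world T Xs Xp \<longleftrightarrow> disjoint_family_on Xs {1..T} \<and> Xp \<inter> (\<Union>k\<in>{1..T}. Xs k) = {}"

text \<open>An open-world task-id prediction: P k = P(x in X_k | D), Pplus = P(x in X^+ | D).\<close>
definition is_TP :: "nat \<Rightarrow> (nat \<Rightarrow> real) \<Rightarrow> real \<Rightarrow> bool" where
  "is_TP T P Pplus \<longleftrightarrow> (\<forall>k\<in>{1..T}. 0 \<le> P k) \<and> 0 \<le> Pplus \<and> (\<Sum>k\<in>{1..T}. P k) + Pplus = 1"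

definition H_TP :: "nat \<Rightarrow> (nat \<Rightarrow> 'a set) \<Rightarrow> (nat \<Rightarrow> real) \<Rightarrow> real \<Rightarrow> 'a \<Rightarrow> ereal" where
  "H_TP T Xs P Pplus x =
     (if \<exists>k\<in>{1..T}. x \<in> Xs k then neglog (P (THE k. k \<in> {1..T} \<and> x \<in> Xs k))
      else neglog Pplus)"

text \<open>Open-world cross-entropy of the OOD detector for task k; P' k = P'_k(x in X_k | D).\<close>
definition H_OOD :: "(nat \<Rightarrow> 'a set) \<Rightarrow> (nat \<Rightarrow> real) \<Rightarrow> nat \<Rightarrow> 'a \<Rightarrow> ereal" where
  "H_OOD Xs P' k x = (if x \<in> Xs k then neglog (P' k) else neglog (1 - P' k))"

definition ood_denom :: "nat \<Rightarrow> (nat \<Rightarrow> real) \<Rightarrow> real" where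
  "ood_denom T P' = (\<Sum>k\<in>{1..T}. P' k) + (\<Prod>k\<in>{1..T}. 1 - P' k)"

end

theory Submission
  imports Defs
begin

lemma neglog_le_iff: "neglog p \<le> ereal d \<longleftrightarrow> p > 0 \<and> - ln p \<le> d"
  by (simp add: neglog_def)

lemma neglog_mono: "0 < p \<Longrightarrow> p \<le> q \<Longrightarrow> neglog q \<le> neglog p"
  by (simp add: neglog_def)

lemma neglog_nonneg_bound: "neglog p \<le> ereal d \<Longrightarrow> p \<le> 1 \<Longrightarrow> 0 \<le> d"
  by (simp add: neglog_def split: if_splits) (smt (verit) ln_le_zero_iff)

lemma neglog_ge_exp: "neglog p \<le> ereal d \<Longrightarrow> exp (- d) \<le> p \<and> 0 < p"
proof -
  assume "neglog p \<le> ereal d"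
  then have p: "p > 0" "- ln p \<le> d" by (auto simp: neglog_le_iff)
  then have "- d \<le> ln p" by simp
  then have "exp (-d) \<le> exp (ln p)" by (simp only: exp_le_cancel_iff)
  also have "exp (ln p) = p" using p by simp
  finally show ?thesis using p by simp
qed

lemma the_idx:
  assumes "disjoint_family_on Xs {1..T}" "k0 \<in> {1..T}" "x \<in> Xs k0"
  shows "(THE k. k \<in> {1..(T::nat)} \<and> x \<in> Xs k) = k0"
proof (rule the_equality)
  fix k assume k: "k \<in> {1..T} \<and> x \<in> Xs k"
  show "k = k0"
  proof (rule ccontr)
    assume "k \<noteq> k0"
    then have "Xs k \<inter> Xs k0 = {}" using assms k by (auto dest: disjoint_family_onD)
    then show False using k assms by blast
  qed
qed (use assms in auto)

lemma neglog_ratio_bound: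
  assumes "0 < a" "a \<le> S" "(S - a) / a \<le> B"
  shows "neglog (a / S) \<le> ereal B"
proof -
  have "- ln (a / S) = ln (S / a)" using assms by (simp add: ln_div)
  also have "\<dots> \<le> S / a - 1" using assms by (intro ln_le_minus_one) auto
  also have "\<dots> = (S - a) / a" using assms by (simp add: field_simps)
  finally show ?thesis using assms by (simp add: neglog_le_iff)
qed

theorem corollary2:
  fixes T :: nat and Xs :: "nat \<Rightarrow> 'a set" and Xp :: "'a set" and x :: 'a
  assumes "open_world T Xs Xp"
    and "x \<in> (\<Union>k\<in>{1..T}. Xs k) \<union> Xp"
  shows "(\<forall>(P :: nat \<Rightarrow> real) Pplus (\<delta> :: real).
            is_TP T P Pplus \<and> H_TP T Xs P Pplus x \<le> ereal \<delta>
            \<longrightarrow> (\<forall>k\<in>{1..T}. H_OOD Xs P k x \<le> ereal \<delta>))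
       \<and> (\<forall>(P' :: nat \<Rightarrow> real) (\<delta> :: nat \<Rightarrow> real).
            (\<forall>k\<in>{1..T}. 0 \<le> P' k \<and> P' k \<le> 1) \<and>
            (\<forall>k\<in>{1..T}. H_OOD Xs P' k x \<le> ereal (\<delta> k))
            \<longrightarrow> H_TP T Xs (\<lambda>k. P' k / ood_denom T P')
                   ((\<Prod>k\<in>{1..T}. 1 - P' k) / ood_denom T P') x
                \<le> ereal (max
                     ((\<Sum>k\<in>{1..T}. (if x \<in> Xs k then 1 else 0) * exp (\<delta> k)) *
                      (\<Sum>k\<in>{1..T}. (1 + (if x \<in> Xs k then 1 else 0)) * (1 - exp (- \<delta> k))))
                     ((\<Prod>k\<in>{1..T}. exp (\<delta> k)) * (\<Sum>k\<in>{1..T}. 1 - exp (- \<delta> k)))))"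
proof -
  have disj: "disjoint_family_on Xs {1..T}" and dp: "Xp \<inter> (\<Union>k\<in>{1..T}. Xs k) = {}"
    using assms(1) by (auto simp: open_world_def)
  have cases: "(\<exists>k0\<in>{1..T}. x \<in> Xs k0 \<and> (\<forall>k\<in>{1..T}. k \<noteq> k0 \<longrightarrow> x \<notin> Xs k))
      \<or> (x \<in> Xp \<and> (\<forall>k\<in>{1..T}. x \<notin> Xs k))"
    using assms(2) disj dp unfolding disjoint_family_on_def by blast
  show ?thesis
  proof (intro conjI allI impI)
    fix P :: "nat \<Rightarrow> real" and Pplus \<delta>
    assume h: "is_TP T P Pplus \<and> H_TP T Xs P Pplus x \<le> ereal \<delta>"
    have P0: "\<forall>k\<in>{1..T}. 0 \<le> P k" "0 \<le> Pplus" "(\<Sum>k\<in>{1..T}. P k) + Pplus = 1"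
      using h by (auto simp: is_TP_def)
    have sumle: "(\<Sum>k\<in>A. P k) \<le> (\<Sum>k\<in>{1..T}. P k)" if "A \<subseteq> {1..T}" for A
      using that P0(1) by (intro sum_mono2) auto
    show "\<forall>k\<in>{1..T}. H_OOD Xs P k x \<le> ereal \<delta>"
    proof
      fix k assume k: "k \<in> {1..T}"
      from cases show "H_OOD Xs P k x \<le> ereal \<delta>"
      proof
        assume "\<exists>k0\<in>{1..T}. x \<in> Xs k0 \<and> (\<forall>k\<in>{1..T}. k \<noteq> k0 \<longrightarrow> x \<notin> Xs k)"
        then obtain k0 where k0: "k0 \<in> {1..T}" "x \<in> Xs k0"
          "\<forall>k\<in>{1..T}. k \<noteq> k0 \<longrightarrow> x \<notin> Xs k" by blast
        have H: "neglog (P k0) \<le> ereal \<delta>"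
        proof -
          have ex: "\<exists>k\<in>{1..T}. x \<in> Xs k" using k0 by blast
          show ?thesis using h unfolding H_TP_def the_idx[OF disj k0(1,2)] if_P[OF ex] by auto
        qed
        then have pk0: "P k0 > 0" by (simp add: neglog_le_iff)
        show ?thesis
        proof (cases "k = k0")
          case True then show ?thesis using H k0 by (simp add: H_OOD_def)
        next
          case False
          have "P k + P k0 = (\<Sum>j\<in>{k,k0}. P j)" using False by simp
          also have "\<dots> \<le> 1" using sumle[of "{k,k0}"] k k0 P0 by auto
          finally have "P k0 \<le> 1 - P k" by simp
          then have "neglog (1 - P k) \<le> neglog (P k0)" using pk0 by (rule neglog_mono[rotated])
          then show ?thesis using H False k k0 by (simp add: H_OOD_def)
        qed
      next
        assume xp: "x \<in> Xp \<and> (\<forall>k\<in>{1..T}. x \<notin> Xs k)"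
        have H: "neglog Pplus \<le> ereal \<delta>"
          using h xp by (auto simp: H_TP_def)
        then have pp: "Pplus > 0" by (simp add: neglog_le_iff)
        have "P k \<le> (\<Sum>j\<in>{1..T}. P j)" using sumle[of "{k}"] k by simp
        then have "Pplus \<le> 1 - P k" using P0 by simp
        then have "neglog (1 - P k) \<le> neglog Pplus" using pp by (rule neglog_mono[rotated])
        then show ?thesis using H xp k by (simp add: H_OOD_def)
      qed
    qed
  next
    fix P' :: "nat \<Rightarrow> real" and \<delta> :: "nat \<Rightarrow> real"
    assume h: "(\<forall>k\<in>{1..T}. 0 \<le> P' k \<and> P' k \<le> 1) \<and>
            (\<forall>k\<in>{1..T}. H_OOD Xs P' k x \<le> ereal (\<delta> k))"
    define S where "S = ood_denom T P'"
    define E where "E = (\<Sum>k\<in>{1..T}. 1 - exp (- \<delta> k))"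
    define Q where "Q = (\<Prod>k\<in>{1..T}. 1 - P' k)"
    have S_def': "S = (\<Sum>k\<in>{1..T}. P' k) + Q" by (simp add: S_def Q_def ood_denom_def)
    have d0: "0 \<le> \<delta> k" if k: "k \<in> {1..T}" for k
    proof -
      have H: "H_OOD Xs P' k x \<le> ereal (\<delta> k)" and p: "0 \<le> P' k" "P' k \<le> 1" using h k by auto
      show ?thesis
      proof (cases "x \<in> Xs k")
        case True
        then have "neglog (P' k) \<le> ereal (\<delta> k)" using H by (simp add: H_OOD_def)
        then show ?thesis using p(2) by (rule neglog_nonneg_bound)
      next
        case False
        then have "neglog (1 - P' k) \<le> ereal (\<delta> k)" using H by (simp add: H_OOD_def)
        then show ?thesis by (rule neglog_nonneg_bound) (use p in simp)
      qed
    qed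
    have E0: "0 \<le> E" unfolding E_def using d0 by (intro sum_nonneg) auto
    have Q0: "0 \<le> Q" unfolding Q_def using h by (intro prod_nonneg) auto
    have sum0: "0 \<le> (\<Sum>k\<in>{1..T}. P' k)" using h by (intro sum_nonneg) auto
    have out: "P' k \<le> 1 - exp (- \<delta> k) \<and> 0 < 1 - P' k" if "k \<in> {1..T}" "x \<notin> Xs k" for k
    proof -
      have "H_OOD Xs P' k x \<le> ereal (\<delta> k)" using h that by blast
      then have "neglog (1 - P' k) \<le> ereal (\<delta> k)" using that by (simp add: H_OOD_def)
      from neglog_ge_exp[OF this] show ?thesis by simp
    qed
    let ?M = "max
                     ((\<Sum>k\<in>{1..T}. (if x \<in> Xs k then 1 else 0) * exp (\<delta> k)) *
                      (\<Sum>k\<in>{1..T}. (1 + (if x \<in> Xs k then 1 else 0)) * (1 - exp (- \<delta> k))))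
                     ((\<Prod>k\<in>{1..T}. exp (\<delta> k)) * (\<Sum>k\<in>{1..T}. 1 - exp (- \<delta> k)))"
    from cases show "H_TP T Xs (\<lambda>k. P' k / ood_denom T P') ((\<Prod>k\<in>{1..T}. 1 - P' k) / ood_denom T P') x \<le> ereal ?M"
    proof
      assume "\<exists>k0\<in>{1..T}. x \<in> Xs k0 \<and> (\<forall>k\<in>{1..T}. k \<noteq> k0 \<longrightarrow> x \<notin> Xs k)"
      then obtain k0 where k0: "k0 \<in> {1..T}" "x \<in> Xs k0"
        "\<forall>k\<in>{1..T}. k \<noteq> k0 \<longrightarrow> x \<notin> Xs k" by blast
      have HT: "H_TP T Xs (\<lambda>k. P' k / ood_denom T P') ((\<Prod>k\<in>{1..T}. 1 - P' k) / ood_denom T P') x = neglog (P' k0 / S)"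
      proof -
        have ex: "\<exists>k\<in>{1..T}. x \<in> Xs k" using k0 by blast
        show ?thesis unfolding H_TP_def the_idx[OF disj k0(1,2)] if_P[OF ex] S_def by simp
      qed
      have "H_OOD Xs P' k0 x \<le> ereal (\<delta> k0)" using h k0 by blast
      then have "neglog (P' k0) \<le> ereal (\<delta> k0)" using k0 by (simp add: H_OOD_def)
      from neglog_ge_exp[OF this] have a: "exp (- \<delta> k0) \<le> P' k0" "0 < P' k0" by auto
      have fin: "finite {1..T}" by simp
      have sumsplit: "(\<Sum>k\<in>{1..T}. P' k) = P' k0 + (\<Sum>k\<in>{1..T} - {k0}. P' k)"
        using k0 by (simp add: sum.remove)
      have Qsplit: "Q = (1 - P' k0) * (\<Prod>k\<in>{1..T} - {k0}. 1 - P' k)"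
        using k0 by (simp add: Q_def prod.remove)
      have "(\<Prod>k\<in>{1..T} - {k0}. 1 - P' k) \<le> 1" using h by (intro prod_le_1) auto
      then have Qle: "Q \<le> 1 - exp (- \<delta> k0)" using Qsplit a h k0
        by (smt (verit) mult_left_le)
      have rest: "(\<Sum>k\<in>{1..T} - {k0}. P' k) \<le> (\<Sum>k\<in>{1..T} - {k0}. 1 - exp (- \<delta> k))"
        using out k0 by (intro sum_mono) auto
      have Esplit: "E = (1 - exp (- \<delta> k0)) + (\<Sum>k\<in>{1..T} - {k0}. 1 - exp (- \<delta> k))"
        using k0 by (simp add: E_def sum.remove)
      have SaE: "S - P' k0 \<le> E" using S_def' sumsplit Qle rest Esplit by linarith
      have aS: "P' k0 \<le> S" using S_def' sumsplit Q0 h k0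
        by (smt (verit) sum_nonneg Diff_subset subsetD)
      have inv: "1 / P' k0 \<le> exp (\<delta> k0)"
        using a by (simp add: exp_minus field_simps)
      have "(S - P' k0) / P' k0 \<le> E / P' k0" using SaE a by (simp add: divide_right_mono)
      also have "\<dots> = E * (1 / P' k0)" by simp
      also have "\<dots> \<le> E * exp (\<delta> k0)" using inv E0 by (rule mult_left_mono)
      also have "\<dots> \<le> ?M"
      proof -
        have s1: "(\<Sum>k\<in>{1..T}. (if x \<in> Xs k then 1 else 0) * exp (\<delta> k)) = exp (\<delta> k0)"
          using k0 by (subst sum.remove[OF fin k0(1)]) (auto intro!: sum.neutral)
        have s2: "(\<Sum>k\<in>{1..T}. (1 + (if x \<in> Xs k then 1 else 0)) * (1 - exp (- \<delta> k)))
            = E + (1 - exp (- \<delta> k0))"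
        proof -
          have "(\<Sum>k\<in>{1..T}. (1 + (if x \<in> Xs k then 1 else 0)) * (1 - exp (- \<delta> k)))
            = (\<Sum>k\<in>{1..T}. (1 - exp (- \<delta> k)) + (if k = k0 then 1 - exp (- \<delta> k0) else 0))"
            using k0 by (intro sum.cong) auto
          also have "\<dots> = E + (1 - exp (- \<delta> k0))"
            using k0 by (simp add: sum.distrib E_def)
          finally show ?thesis .
        qed
        have "0 \<le> 1 - exp (- \<delta> k0)" using d0 k0 by simp
        then have "E * exp (\<delta> k0) \<le> exp (\<delta> k0) * (E + (1 - exp (- \<delta> k0)))"
          by (simp add: algebra_simps)
        then show ?thesis unfolding s1 s2 by linarith
      qed
      finally show ?thesis unfolding HT using a aS by (intro neglog_ratio_bound) auto
    next
      assume xp: "x \<in> Xp \<and> (\<forall>k\<in>{1..T}. x \<notin> Xs k)"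
      have HT: "H_TP T Xs (\<lambda>k. P' k / ood_denom T P') ((\<Prod>k\<in>{1..T}. 1 - P' k) / ood_denom T P') x = neglog (Q / S)"
        using xp by (auto simp: H_TP_def S_def Q_def)
      have Qpos: "0 < Q" unfolding Q_def using out xp by (intro prod_pos) auto
      have "(\<Prod>k\<in>{1..T}. (1::real)) \<le> (\<Prod>k\<in>{1..T}. exp (\<delta> k) * (1 - P' k))"
      proof (intro prod_mono conjI)
        fix k assume k: "k \<in> {1..T}"
        have "exp (- \<delta> k) \<le> 1 - P' k" using out[OF k] xp k by simp
        then have "exp (\<delta> k) * exp (- \<delta> k) \<le> exp (\<delta> k) * (1 - P' k)" by simp
        then show "1 \<le> exp (\<delta> k) * (1 - P' k)" by (simp add: exp_minus)
      qed simp
      then have PQ: "1 \<le> (\<Prod>k\<in>{1..T}. exp (\<delta> k)) * Q" by (simp add: Q_def prod.distrib)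
      have sE: "(\<Sum>k\<in>{1..T}. P' k) \<le> E" unfolding E_def using out xp by (intro sum_mono) auto
      have "(S - Q) / Q = (\<Sum>k\<in>{1..T}. P' k) / Q" by (simp add: S_def')
      also have "\<dots> \<le> E / Q" using sE Qpos by (simp add: divide_right_mono)
      also have "\<dots> \<le> E * (\<Prod>k\<in>{1..T}. exp (\<delta> k))"
        using PQ Qpos E0 by (simp add: divide_le_eq mult_left_mono[of 1 _ E, simplified] mult.assoc)
      also have "\<dots> \<le> ?M" by (simp add: E_def mult.commute)
      finally show ?thesis unfolding HT using Qpos S_def' sum0 by (intro neglog_ratio_bound) auto
    qed
  qed
qed

end
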